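(* Let ${\cal G}$ be a graph as described in the context, and let $\rho_{\sup}$, $\rho_{\inf}$ be the supremum and infimum of its half-degree. Let $f\in C^0_{\rm fn}({\cal G})$ be edgewise convex (its restriction to each edge interval is convex, not necessarily strictly) and non-negative at all vertices. Then $$\int_{\cal G} f\,d{\cal E}\le \rho_{\sup}\int_{\cal G} f\,d{\cal V}.$$ Similarly, if $f\in C^0_{\rm fn}({\cal G})$ is non-negative and edgewise concave, then $\int_{\cal G} f\,d{\cal E}\ge \rho_{\inf}\int_{\cal G} f\,d{\cal V}$. If ${\cal G}$ is regular (i.e. $\rho_{\inf}=\rho_{\sup}$), the non-negativity requirements may be dropped.
   Context: A graph ${\cal G}$ consists of an undirected graph $(V,E)$ (possibly infinite; multiple edges and self-loops allowed), a length $\ell_e>0$ for each edge $e$, a specified subset $\partial{\cal G}\subseteq V$ of boundary vertices, a vertex measure ${\cal V}$ (a measure supported on $V$ with ${\cal V}(v)>0$ for every $v\in V$), and an edge measure ${\cal E}$ (a measure giving zero mass to every vertex whose restriction to the interior of each edge $e$ equals $a_e>0$ times Lebesgue measure). ${\cal G}$ is identified with its geometric realization: the metric space obtained by attaching, for each edge $e$ with endpoints $u,v$, a closed interval of length $\ell_e$ joining $u$ and $v$. $C^0({\cal G})$ is the set of continuous functions on this space; a function is of finite type if its support lies in the union of finitely many vertices and edges, and $C^0_{\rm fn}({\cal G})$ denotes the finite-type elements of $C^0({\cal G})$. The half-degree of a vertex $v$ is $\rho(v)={\cal V}(v)^{-1}\sum_{e\ni v}{\cal E}(e)/2$ (sum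 over edges having $v$ as an endpoint), and $\rho_{\sup},\rho_{\inf}$ are the supremum and infimum of $\rho$ over $V$. *)

theory Defs
  imports "HOL-Analysis.Analysis"
begin

text \<open>
A metric graph is given by a vertex set Vs, an edge set Es, an endpoint map
ends (each edge e joins fst (ends e) to snd (ends e); the orientation is an
arbitrary choice, self-loops and multiple edges are allowed), edge lengths len,
vertex masses Vm (the vertex measure) and edge densities a (the edge measure
restricted to the interior of e is a e times Lebesgue measure).
\<close>

definition metric_graph ::
  "'v set \<Rightarrow> 'e set \<Rightarrow> ('e \<Rightarrow> 'v \<times> 'v) \<Rightarrow> ('e \<Rightarrow> real) \<Rightarrow> ('v \<Rightarrow> real) \<Rightarrow> ('e \<Rightarrow> real) \<Rightarrow> bool"
where
  "metric_graph Vs Es ends len Vm a \<longleftrightarrow>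
     (\<forall>e\<in>Es. fst (ends e) \<in> Vs \<and> snd (ends e) \<in> Vs \<and> len e > 0 \<and> a e > 0) \<and>
     (\<forall>v\<in>Vs. Vm v > 0)"

definition edge_mass :: "('e \<Rightarrow> real) \<Rightarrow> ('e \<Rightarrow> real) \<Rightarrow> 'e \<Rightarrow> real" where
  "edge_mass len a e = a e * len e"

text \<open>Number of endpoints of e equal to v (a self-loop at v counts twice).\<close>
definition incidence :: "('e \<Rightarrow> 'v \<times> 'v) \<Rightarrow> 'e \<Rightarrow> 'v \<Rightarrow> nat" where
  "incidence ends e v = (if fst (ends e) = v then 1 else 0) + (if snd (ends e) = v then 1 else 0)"

definition half_degree ::
  "'e set \<Rightarrow> ('e \<Rightarrow> 'v \<times> 'v) \<Rightarrow> ('e \<Rightarrow> real) \<Rightarrow> ('v \<Rightarrow> real) \<Rightarrow> ('e \<Rightarrow> real) \<Rightarrow> 'v \<Rightarrow> ennreal"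
where
  "half_degree Es ends len Vm a v =
     (\<Sum>\<^sub>\<infinity>e\<in>Es. ennreal (real (incidence ends e v) * edge_mass len a e / 2)) / ennreal (Vm v)"

definition rho_sup where
  "rho_sup Vs Es ends len Vm a = (SUP v\<in>Vs. half_degree Es ends len Vm a v)"

definition rho_inf where
  "rho_inf Vs Es ends len Vm a = (INF v\<in>Vs. half_degree Es ends len Vm a v)"

text \<open>
A function on the geometric realization is represented by its vertex values fv
and, for each edge e, a function fe e on the interval [0, len e] (parameter 0
at fst (ends e), parameter len e at snd (ends e)).  Continuity on the
realization means continuity on each closed edge interval plus matching the
vertex values at the endpoints.
\<close>
definition graph_C0 ::
  "'e set \<Rightarrow> ('e \<Rightarrow> 'v \<times> 'v) \<Rightarrow> ('e \<Rightarrow> real) \<Rightarrow> ('v \<Rightarrow> real) \<Rightarrow> ('e \<Rightarrow> real \<Rightarrow> real) \<Rightarrow> bool"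
where
  "graph_C0 Es ends len fv fe \<longleftrightarrow>
     (\<forall>e\<in>Es. continuous_on {0..len e} (fe e) \<and>
              fe e 0 = fv (fst (ends e)) \<and> fe e (len e) = fv (snd (ends e)))"

definition finite_type ::
  "'v set \<Rightarrow> 'e set \<Rightarrow> ('e \<Rightarrow> real) \<Rightarrow> ('v \<Rightarrow> real) \<Rightarrow> ('e \<Rightarrow> real \<Rightarrow> real) \<Rightarrow> bool"
where
  "finite_type Vs Es len fv fe \<longleftrightarrow>
     finite {v\<in>Vs. fv v \<noteq> 0} \<and> finite {e\<in>Es. \<exists>t\<in>{0..len e}. fe e t \<noteq> 0}"

definition graph_C0_fn where
  "graph_C0_fn Vs Es ends len fv fe \<longleftrightarrow>
     graph_C0 Es ends len fv fe \<and> finite_type Vs Es len fv fe"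

definition int_V :: "'v set \<Rightarrow> ('v \<Rightarrow> real) \<Rightarrow> ('v \<Rightarrow> real) \<Rightarrow> real" where
  "int_V Vs Vm fv = (\<Sum>\<^sub>\<infinity>v\<in>Vs. Vm v * fv v)"

definition int_E :: "'e set \<Rightarrow> ('e \<Rightarrow> real) \<Rightarrow> ('e \<Rightarrow> real) \<Rightarrow> ('e \<Rightarrow> real \<Rightarrow> real) \<Rightarrow> real" where
  "int_E Es len a fe = (\<Sum>\<^sub>\<infinity>e\<in>Es. a e * integral {0..len e} (fe e))"

end

theory Submission
  imports Defs
begin


lemma convex_integral_le:
  fixes f :: "real \<Rightarrow> real"
  assumes l: "l > 0" and c: "continuous_on {0..l} f" and cv: "convex_on {0..l} f"
  shows "integral {0..l} f \<le> l * (f 0 + f l) / 2"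
proof -
  define g where "g = (\<lambda>t. f 0 + ((f l - f 0) / l) * t)"
  have gi0: "((\<lambda>x. f 0 + c * x) has_integral l * f 0 + c * l\<^sup>2 / 2) {0..l}" for c
    using has_integral_add[OF has_integral_const_real[of "f 0" 0 l] has_integral_mult_right[OF ident_has_integral[of 0 l]]] l
    by simp
  have gi: "(g has_integral l * f 0 + ((f l - f 0) / l) * l\<^sup>2 / 2) {0..l}"
    unfolding g_def by (rule gi0)
  have "f t \<le> g t" if t: "t \<in> {0..l}" for t
  proof -
    have s: "0 \<le> t / l" "t / l \<le> 1" using t l by auto
    have "f ((1 - t/l) * 0 + (t/l) * l) \<le> (1 - t/l) * f 0 + (t/l) * f l"
      using convex_onD[OF cv, of "t/l" 0 l] s l by auto
    moreover have "(1 - t/l) * 0 + (t/l) * l = t" using l by simp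
    moreover have "(1 - t/l) * f 0 + (t/l) * f l = g t" unfolding g_def using l
      by (simp add: field_simps)
    ultimately show ?thesis by simp
  qed
  then have "integral {0..l} f \<le> integral {0..l} g"
    using integral_le[of f "{0..l}" g] integrable_continuous_real[OF c] gi by (auto simp: has_integral_integrable)
  also have "integral {0..l} g = l * (f 0 + f l) / 2"
  proof -
    have "((f l - f 0) / l) * l\<^sup>2 = (f l - f 0) * l" using l by (simp add: power2_eq_square)
    moreover have "integral {0..l} g = l * f 0 + ((f l - f 0) / l) * l\<^sup>2 / 2" by (rule integral_unique[OF gi])
    ultimately have "integral {0..l} g = l * f 0 + ((f l - f 0) * l) / 2" by simp
    then show ?thesis by (simp add: field_simps)
  qed
  finally show ?thesis .
qed

lemma concave_integral_ge:
  fixes f :: "real \<Rightarrow> real"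
  assumes l: "l > 0" and c: "continuous_on {0..l} f" and cv: "concave_on {0..l} f"
  shows "integral {0..l} f \<ge> l * (f 0 + f l) / 2"
proof -
  have "integral {0..l} (\<lambda>x. - f x) \<le> l * (- f 0 + - f l) / 2"
    using convex_integral_le[OF l _ cv[unfolded concave_on_def]] c continuous_on_minus by blast
  moreover have "l * (- f 0 + - f l) / 2 = - (l * (f 0 + f l) / 2)" by (simp add: algebra_simps)
  moreover have "integral {0..l} (\<lambda>x. - f x) = - integral {0..l} f"
    by (simp add: integral_neg integrable_continuous_real[OF c])
  ultimately show ?thesis by linarith
qed



lemma core:
  assumes G: "metric_graph Vs Es ends len Vm a"
    and F: "graph_C0_fn Vs Es ends len fv fe"
  defines "FV \<equiv> {v\<in>Vs. fv v \<noteq> 0}"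
    and "FE \<equiv> {e\<in>Es. \<exists>t\<in>{0..len e}. fe e t \<noteq> 0}"
    and "r \<equiv> \<lambda>v. (\<Sum>e\<in>{e\<in>Es. \<exists>t\<in>{0..len e}. fe e t \<noteq> 0}. real (incidence ends e v) * edge_mass len a e / 2) / Vm v"
  shows "finite FV" "finite FE"
    "\<And>v. v \<in> FV \<Longrightarrow> half_degree Es ends len Vm a v = ennreal (r v) \<and> r v \<ge> 0"
    "int_V Vs Vm fv = (\<Sum>v\<in>FV. Vm v * fv v)"
    "int_E Es len a fe = (\<Sum>e\<in>FE. a e * integral {0..len e} (fe e))"
    "(\<Sum>e\<in>FE. edge_mass len a e * (fv (fst (ends e)) + fv (snd (ends e))) / 2)
       = (\<Sum>v\<in>FV. Vm v * fv v * r v)"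
    "FE \<subseteq> Es" "FV \<subseteq> Vs"
proof -
  have r_def': "r = (\<lambda>v. (\<Sum>e\<in>FE. real (incidence ends e v) * edge_mass len a e / 2) / Vm v)"
    unfolding r_def FE_def ..
  have C: "\<And>e. e \<in> Es \<Longrightarrow> continuous_on {0..len e} (fe e) \<and>
              fe e 0 = fv (fst (ends e)) \<and> fe e (len e) = fv (snd (ends e))"
    using F unfolding graph_C0_fn_def graph_C0_def by blast
  have Gs: "\<And>e. e \<in> Es \<Longrightarrow> fst (ends e) \<in> Vs \<and> snd (ends e) \<in> Vs \<and> len e > 0 \<and> a e > 0"
    "\<And>v. v \<in> Vs \<Longrightarrow> Vm v > 0"
    using G unfolding metric_graph_def by auto
  show fFV: "finite FV" and fFE: "finite FE"
    using F unfolding graph_C0_fn_def finite_type_def FV_def FE_def by auto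
  show FES: "FE \<subseteq> Es" and "FV \<subseteq> Vs" unfolding FE_def FV_def by auto
  have inc0: "incidence ends e v = 0" if "e \<in> Es - FE" "v \<in> FV" for e v
  proof -
    have "fe e 0 = 0" "fe e (len e) = 0" using that Gs(1)[of e] unfolding FE_def by auto
    then have "fv (fst (ends e)) = 0" "fv (snd (ends e)) = 0" using C[of e] that by auto
    then show ?thesis using that unfolding incidence_def FV_def by auto
  qed
  have nn: "\<And>e. e \<in> FE \<Longrightarrow> 0 \<le> real (incidence ends e v) * edge_mass len a e / 2" for v
  proof -
    fix e assume "e \<in> FE"
    then have "a e * len e > 0" using Gs(1) FES by auto
    then show "0 \<le> real (incidence ends e v) * edge_mass len a e / 2"
      unfolding edge_mass_def by simp
  qed
  have rnn: "r v \<ge> 0" if "v \<in> FV" for v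
    unfolding r_def' using that Gs(2)[of v] sum_nonneg[OF nn[of _ v]] unfolding FV_def
    by (auto intro!: divide_nonneg_pos)
  show "half_degree Es ends len Vm a v = ennreal (r v) \<and> r v \<ge> 0" if v: "v \<in> FV" for v
  proof -
    have "(\<Sum>\<^sub>\<infinity>e\<in>Es. ennreal (real (incidence ends e v) * edge_mass len a e / 2))
        = (\<Sum>\<^sub>\<infinity>e\<in>FE. ennreal (real (incidence ends e v) * edge_mass len a e / 2))"
      by (rule infsum_cong_neutral) (use inc0[OF _ v] FES in auto)
    also have "\<dots> = ennreal (\<Sum>e\<in>FE. real (incidence ends e v) * edge_mass len a e / 2)"
      using fFE nn[of _ v] by simp
    finally have "half_degree Es ends len Vm a v = ennreal (\<Sum>e\<in>FE. real (incidence ends e v) * edge_mass len a e / 2) / ennreal (Vm v)"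
      unfolding half_degree_def by simp
    also have "\<dots> = ennreal (r v)" unfolding r_def'
      using v Gs(2)[of v] sum_nonneg[of FE "\<lambda>e. real (incidence ends e v) * edge_mass len a e / 2"] nn[of _ v]
      by (subst divide_ennreal) (auto simp: FV_def)
    finally show ?thesis using rnn[OF v] by simp
  qed
  show "int_V Vs Vm fv = (\<Sum>v\<in>FV. Vm v * fv v)"
    unfolding int_V_def using fFV by (subst infsum_cong_neutral[where T=FV and g="\<lambda>v. Vm v * fv v"]) (auto simp: FV_def)
  show "int_E Es len a fe = (\<Sum>e\<in>FE. a e * integral {0..len e} (fe e))"
  proof -
    have "integral {0..len e} (fe e) = 0" if "e \<in> Es - FE" for e
    proof -
      have "integral {0..len e} (fe e) = integral {0..len e} (\<lambda>_. 0::real)"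
        by (rule integral_cong) (use that in \<open>auto simp: FE_def\<close>)
      then show ?thesis by simp
    qed
    then show ?thesis unfolding int_E_def using fFE
      by (subst infsum_cong_neutral[where T=FE and g="\<lambda>e. a e * integral {0..len e} (fe e)"]) (use FES in auto)
  qed
  show "(\<Sum>e\<in>FE. edge_mass len a e * (fv (fst (ends e)) + fv (snd (ends e))) / 2)
       = (\<Sum>v\<in>FV. Vm v * fv v * r v)"
  proof -
    have es: "(\<Sum>v\<in>FV. real (incidence ends e v) * fv v) = fv (fst (ends e)) + fv (snd (ends e))"
      if e: "e \<in> Es" for e
    proof -
      have "(\<Sum>v\<in>FV. real (incidence ends e v) * fv v)
          = (\<Sum>v\<in>FV. (if fst (ends e) = v then fv v else 0)) + (\<Sum>v\<in>FV. (if snd (ends e) = v then fv v else 0))"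
        unfolding incidence_def sum.distrib[symmetric] by (rule sum.cong) auto
      also have "\<dots> = fv (fst (ends e)) + fv (snd (ends e))"
        using fFV Gs(1)[OF e] by (simp add: FV_def)
      finally show ?thesis .
    qed
    have "(\<Sum>v\<in>FV. Vm v * fv v * r v)
        = (\<Sum>v\<in>FV. \<Sum>e\<in>FE. fv v * (real (incidence ends e v) * edge_mass len a e / 2))"
    proof (rule sum.cong[OF refl])
      fix v assume v: "v \<in> FV"
      then have "Vm v > 0" using Gs(2) by (auto simp: FV_def)
      then have "Vm v * r v = (\<Sum>e\<in>FE. real (incidence ends e v) * edge_mass len a e / 2)"
        unfolding r_def' by simp
      then show "Vm v * fv v * r v = (\<Sum>e\<in>FE. fv v * (real (incidence ends e v) * edge_mass len a e / 2))"
      proof -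
        have "Vm v * fv v * r v = fv v * (Vm v * r v)" by simp
        also have "\<dots> = (\<Sum>e\<in>FE. fv v * (real (incidence ends e v) * edge_mass len a e / 2))"
          unfolding \<open>Vm v * r v = _\<close> by (rule sum_distrib_left)
        finally show ?thesis .
      qed
    qed
    also have "\<dots> = (\<Sum>e\<in>FE. \<Sum>v\<in>FV. fv v * (real (incidence ends e v) * edge_mass len a e / 2))"
      by (rule sum.swap)
    also have "\<dots> = (\<Sum>e\<in>FE. edge_mass len a e / 2 * (\<Sum>v\<in>FV. real (incidence ends e v) * fv v))"
      by (simp add: sum_distrib_left algebra_simps)
    also have "\<dots> = (\<Sum>e\<in>FE. edge_mass len a e * (fv (fst (ends e)) + fv (snd (ends e))) / 2)"
      using es FES by (intro sum.cong) auto
    finally show ?thesis by simp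
  qed
qed



lemma finish_conv:
  fixes w r :: "'v \<Rightarrow> real" and S :: ennreal
  assumes fin: "finite FV" and IE: "IE \<le> (\<Sum>v\<in>FV. w v * r v)" and IV: "IV = (\<Sum>v\<in>FV. w v)"
    and w: "\<And>v. v \<in> FV \<Longrightarrow> w v \<ge> 0" and r: "\<And>v. v \<in> FV \<Longrightarrow> r v \<ge> 0 \<and> ennreal (r v) \<le> S"
  shows "ereal IE \<le> enn2ereal S * ereal IV"
proof (cases "S = top")
  case True
  show ?thesis
  proof (cases "IV = 0")
    case True
    then have "\<forall>v\<in>FV. w v = 0" using IV w fin sum_nonneg_eq_0_iff by metis
    then have "(\<Sum>v\<in>FV. w v * r v) = 0" by simp
    then show ?thesis using IE True by (simp add: zero_ereal_def[symmetric])
  next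
    case False
    then have "IV > 0" using IV w sum_nonneg[of FV w] by force
    then show ?thesis using \<open>S = top\<close> by simp
  qed
next
  case False
  then obtain s where s: "S = ennreal s" "s \<ge> 0" by (cases S) auto
  have "(\<Sum>v\<in>FV. w v * r v) \<le> (\<Sum>v\<in>FV. w v * s)"
    using r w s by (intro sum_mono mult_left_mono) auto
  also have "\<dots> = s * IV" unfolding IV by (simp add: sum_distrib_left mult.commute)
  finally show ?thesis using IE s by simp
qed

lemma finish_conc:
  fixes w r :: "'v \<Rightarrow> real" and I :: ennreal
  assumes fin: "finite FV" and IE: "IE \<ge> (\<Sum>v\<in>FV. w v * r v)" and IV: "IV = (\<Sum>v\<in>FV. w v)"
    and w: "\<And>v. v \<in> FV \<Longrightarrow> w v \<ge> 0" and r: "\<And>v. v \<in> FV \<Longrightarrow> r v \<ge> 0 \<and> I \<le> ennreal (r v)"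
  shows "enn2ereal I * ereal IV \<le> ereal IE"
proof (cases "FV = {}")
  case True
  then show ?thesis using IE IV by (simp add: zero_ereal_def[symmetric])
next
  case False
  then obtain v0 where v0: "v0 \<in> FV" by auto
  then have "I \<noteq> top" using r[OF v0] by (auto simp: top_unique)
  then obtain s where s: "I = ennreal s" "s \<ge> 0" by (cases I) auto
  have "s * IV = (\<Sum>v\<in>FV. w v * s)" unfolding IV by (simp add: sum_distrib_left mult.commute)
  also have "\<dots> \<le> (\<Sum>v\<in>FV. w v * r v)"
  proof (intro sum_mono mult_left_mono)
    fix v assume v: "v \<in> FV"
    then show "0 \<le> w v" using w by auto
    from r[OF v] s show "s \<le> r v" by auto
  qed
  finally show ?thesis using IE s by simp
qed

lemma finish_reg:
  fixes w r :: "'v \<Rightarrow> real" and S :: ennreal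
  assumes fin: "finite FV" and IV: "IV = (\<Sum>v\<in>FV. w v)"
    and r: "\<And>v. v \<in> FV \<Longrightarrow> r v \<ge> 0 \<and> ennreal (r v) = S"
  shows "ereal (\<Sum>v\<in>FV. w v * r v) = enn2ereal S * ereal IV"
proof (cases "FV = {}")
  case True
  then show ?thesis using IV by (simp add: zero_ereal_def[symmetric])
next
  case False
  then obtain v0 where v0: "v0 \<in> FV" by auto
  define s where "s = r v0"
  have s: "S = ennreal s" "s \<ge> 0" using r[OF v0] s_def by auto
  have "r v = s" if "v \<in> FV" for v using r[OF that] s by (auto simp: ennreal_inj)
  then have "(\<Sum>v\<in>FV. w v * r v) = (\<Sum>v\<in>FV. w v * s)" by simp
  also have "\<dots> = s * IV" unfolding IV by (simp add: sum_distrib_left mult.commute)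
  finally show ?thesis using s by simp
qed



lemma core2:
  assumes G: "metric_graph Vs Es ends len Vm a"
    and F: "graph_C0_fn Vs Es ends len fv fe"
  shows "\<exists>FV FE r. finite FV \<and> FE \<subseteq> Es \<and> FV \<subseteq> Vs \<and>
    (\<forall>v\<in>FV. half_degree Es ends len Vm a v = ennreal (r v) \<and> r v \<ge> 0) \<and>
    int_V Vs Vm fv = (\<Sum>v\<in>FV. Vm v * fv v) \<and>
    int_E Es len a fe = (\<Sum>e\<in>FE. a e * integral {0..len e} (fe e)) \<and>
    (\<Sum>e\<in>FE. edge_mass len a e * (fv (fst (ends e)) + fv (snd (ends e))) / 2)
       = (\<Sum>v\<in>FV. Vm v * fv v * r v)"
proof -
  note c = core[OF G F]
  show ?thesis
    apply (rule exI[where x="{v\<in>Vs. fv v \<noteq> 0}"])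
    apply (rule exI[where x="{e\<in>Es. \<exists>t\<in>{0..len e}. fe e t \<noteq> 0}"])
    apply (rule exI[where x="\<lambda>v. (\<Sum>e\<in>{e\<in>Es. \<exists>t\<in>{0..len e}. fe e t \<noteq> 0}. real (incidence ends e v) * edge_mass len a e / 2) / Vm v"])
    apply (intro conjI ballI)
    using c by blast+
qed

lemma edge_le:
  assumes G: "metric_graph Vs Es ends len Vm a"
    and F: "graph_C0_fn Vs Es ends len fv fe" and e: "e \<in> Es"
  shows "convex_on {0..len e} (fe e) \<Longrightarrow>
      a e * integral {0..len e} (fe e) \<le> edge_mass len a e * (fv (fst (ends e)) + fv (snd (ends e))) / 2"
    and "concave_on {0..len e} (fe e) \<Longrightarrow>
      a e * integral {0..len e} (fe e) \<ge> edge_mass len a e * (fv (fst (ends e)) + fv (snd (ends e))) / 2"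
proof -
  have C: "continuous_on {0..len e} (fe e)" "fe e 0 = fv (fst (ends e))" "fe e (len e) = fv (snd (ends e))"
    using F e unfolding graph_C0_fn_def graph_C0_def by auto
  have P: "len e > 0" "a e > 0" using G e unfolding metric_graph_def by auto
  have eq: "edge_mass len a e * (fv (fst (ends e)) + fv (snd (ends e))) / 2
      = a e * (len e * (fe e 0 + fe e (len e)) / 2)" unfolding edge_mass_def C(2,3) by simp
  show "a e * integral {0..len e} (fe e) \<le> edge_mass len a e * (fv (fst (ends e)) + fv (snd (ends e))) / 2"
    if "convex_on {0..len e} (fe e)"
    unfolding eq using convex_integral_le[OF P(1) C(1) that] P(2) by (intro mult_left_mono) auto
  show "a e * integral {0..len e} (fe e) \<ge> edge_mass len a e * (fv (fst (ends e)) + fv (snd (ends e))) / 2"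
    if "concave_on {0..len e} (fe e)"
    unfolding eq using concave_integral_ge[OF P(1) C(1) that] P(2) by (intro mult_left_mono) auto
qed

theorem mainTheorem1:
  fixes Vs :: "'v set" and Es :: "'e set" and ends :: "'e \<Rightarrow> 'v \<times> 'v"
    and len :: "'e \<Rightarrow> real" and Vm :: "'v \<Rightarrow> real" and a :: "'e \<Rightarrow> real"
  assumes G: "metric_graph Vs Es ends len Vm a"
  shows
   "(\<forall>fv fe. graph_C0_fn Vs Es ends len fv fe
        \<and> (\<forall>e\<in>Es. convex_on {0..len e} (fe e)) \<and> (\<forall>v\<in>Vs. fv v \<ge> 0)
      \<longrightarrow> ereal (int_E Es len a fe)
            \<le> enn2ereal (rho_sup Vs Es ends len Vm a) * ereal (int_V Vs Vm fv))
  \<and> (\<forall>fv fe. graph_C0_fn Vs Es ends len fv fe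
        \<and> (\<forall>e\<in>Es. concave_on {0..len e} (fe e))
        \<and> (\<forall>v\<in>Vs. fv v \<ge> 0) \<and> (\<forall>e\<in>Es. \<forall>t\<in>{0..len e}. fe e t \<ge> 0)
      \<longrightarrow> enn2ereal (rho_inf Vs Es ends len Vm a) * ereal (int_V Vs Vm fv)
            \<le> ereal (int_E Es len a fe))
  \<and> (rho_inf Vs Es ends len Vm a = rho_sup Vs Es ends len Vm a \<longrightarrow>
      (\<forall>fv fe. graph_C0_fn Vs Es ends len fv fe
          \<and> (\<forall>e\<in>Es. convex_on {0..len e} (fe e))
        \<longrightarrow> ereal (int_E Es len a fe)
              \<le> enn2ereal (rho_sup Vs Es ends len Vm a) * ereal (int_V Vs Vm fv))
    \<and> (\<forall>fv fe. graph_C0_fn Vs Es ends len fv fe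
          \<and> (\<forall>e\<in>Es. concave_on {0..len e} (fe e))
        \<longrightarrow> enn2ereal (rho_inf Vs Es ends len Vm a) * ereal (int_V Vs Vm fv)
              \<le> ereal (int_E Es len a fe)))"
proof -
  have Vpos: "\<And>v. v \<in> Vs \<Longrightarrow> Vm v > 0" using G unfolding metric_graph_def by auto
  have hsup: "\<And>v. v \<in> Vs \<Longrightarrow> half_degree Es ends len Vm a v \<le> rho_sup Vs Es ends len Vm a"
    unfolding rho_sup_def by (rule SUP_upper)
  have hinf: "\<And>v. v \<in> Vs \<Longrightarrow> rho_inf Vs Es ends len Vm a \<le> half_degree Es ends len Vm a v"
    unfolding rho_inf_def by (rule INF_lower)
  have convb: "int_E Es len a fe \<le> (\<Sum>v\<in>FV. Vm v * fv v * r v)"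
    if F: "graph_C0_fn Vs Es ends len fv fe" and cv: "\<forall>e\<in>Es. convex_on {0..len e} (fe e)"
      and FE: "FE \<subseteq> Es" and IE: "int_E Es len a fe = (\<Sum>e\<in>FE. a e * integral {0..len e} (fe e))"
      and ID: "(\<Sum>e\<in>FE. edge_mass len a e * (fv (fst (ends e)) + fv (snd (ends e))) / 2)
       = (\<Sum>v\<in>FV. Vm v * fv v * r v)" for fv fe FE FV r
    unfolding IE ID[symmetric] using edge_le(1)[OF G F] cv FE by (intro sum_mono) auto
  have concb: "int_E Es len a fe \<ge> (\<Sum>v\<in>FV. Vm v * fv v * r v)"
    if F: "graph_C0_fn Vs Es ends len fv fe" and cv: "\<forall>e\<in>Es. concave_on {0..len e} (fe e)"
      and FE: "FE \<subseteq> Es" and IE: "int_E Es len a fe = (\<Sum>e\<in>FE. a e * integral {0..len e} (fe e))"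
      and ID: "(\<Sum>e\<in>FE. edge_mass len a e * (fv (fst (ends e)) + fv (snd (ends e))) / 2)
       = (\<Sum>v\<in>FV. Vm v * fv v * r v)" for fv fe FE FV r
    unfolding IE ID[symmetric] using edge_le(2)[OF G F] cv FE by (intro sum_mono) auto
  show ?thesis
  proof (intro conjI allI impI)
    fix fv fe
    assume A: "graph_C0_fn Vs Es ends len fv fe \<and> (\<forall>e\<in>Es. convex_on {0..len e} (fe e)) \<and> (\<forall>v\<in>Vs. 0 \<le> fv v)"
    then obtain FV FE r where c: "finite FV" "FE \<subseteq> Es" "FV \<subseteq> Vs"
      "\<forall>v\<in>FV. half_degree Es ends len Vm a v = ennreal (r v) \<and> r v \<ge> 0"
      "int_V Vs Vm fv = (\<Sum>v\<in>FV. Vm v * fv v)"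
      "int_E Es len a fe = (\<Sum>e\<in>FE. a e * integral {0..len e} (fe e))"
      "(\<Sum>e\<in>FE. edge_mass len a e * (fv (fst (ends e)) + fv (snd (ends e))) / 2)
       = (\<Sum>v\<in>FV. Vm v * fv v * r v)" using core2[OF G, of fv fe] A by blast
    have b: "int_E Es len a fe \<le> (\<Sum>v\<in>FV. Vm v * fv v * r v)" using convb[OF _ _ c(2,6,7)] A by blast
    show "ereal (int_E Es len a fe) \<le> enn2ereal (rho_sup Vs Es ends len Vm a) * ereal (int_V Vs Vm fv)"
    proof (rule finish_conv[OF c(1) b c(5)])
      fix v assume v: "v \<in> FV" then have v': "v \<in> Vs" using c(3) by auto
      show "0 \<le> Vm v * fv v" using Vpos[OF v'] A v' by simp
      show "0 \<le> r v \<and> ennreal (r v) \<le> rho_sup Vs Es ends len Vm a" using c(4) v hsup[OF v'] by auto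
    qed
  next
    fix fv fe
    assume A: "graph_C0_fn Vs Es ends len fv fe \<and> (\<forall>e\<in>Es. concave_on {0..len e} (fe e)) \<and> (\<forall>v\<in>Vs. 0 \<le> fv v)
       \<and> (\<forall>e\<in>Es. \<forall>t\<in>{0..len e}. fe e t \<ge> 0)"
    then obtain FV FE r where c: "finite FV" "FE \<subseteq> Es" "FV \<subseteq> Vs"
      "\<forall>v\<in>FV. half_degree Es ends len Vm a v = ennreal (r v) \<and> r v \<ge> 0"
      "int_V Vs Vm fv = (\<Sum>v\<in>FV. Vm v * fv v)"
      "int_E Es len a fe = (\<Sum>e\<in>FE. a e * integral {0..len e} (fe e))"
      "(\<Sum>e\<in>FE. edge_mass len a e * (fv (fst (ends e)) + fv (snd (ends e))) / 2)
       = (\<Sum>v\<in>FV. Vm v * fv v * r v)" using core2[OF G, of fv fe] A by blast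
    have b: "int_E Es len a fe \<ge> (\<Sum>v\<in>FV. Vm v * fv v * r v)" using concb[OF _ _ c(2,6,7)] A by blast
    show "enn2ereal (rho_inf Vs Es ends len Vm a) * ereal (int_V Vs Vm fv) \<le> ereal (int_E Es len a fe)"
    proof (rule finish_conc[OF c(1) b c(5)])
      fix v assume v: "v \<in> FV" then have v': "v \<in> Vs" using c(3) by auto
      show "0 \<le> Vm v * fv v" using Vpos[OF v'] A v' by simp
      show "0 \<le> r v \<and> rho_inf Vs Es ends len Vm a \<le> ennreal (r v)" using c(4) v hinf[OF v'] by auto
    qed
  next
    fix fv fe
    assume R: "rho_inf Vs Es ends len Vm a = rho_sup Vs Es ends len Vm a"
      and A: "graph_C0_fn Vs Es ends len fv fe \<and> (\<forall>e\<in>Es. convex_on {0..len e} (fe e))"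
    then obtain FV FE r where c: "finite FV" "FE \<subseteq> Es" "FV \<subseteq> Vs"
      "\<forall>v\<in>FV. half_degree Es ends len Vm a v = ennreal (r v) \<and> r v \<ge> 0"
      "int_V Vs Vm fv = (\<Sum>v\<in>FV. Vm v * fv v)"
      "int_E Es len a fe = (\<Sum>e\<in>FE. a e * integral {0..len e} (fe e))"
      "(\<Sum>e\<in>FE. edge_mass len a e * (fv (fst (ends e)) + fv (snd (ends e))) / 2)
       = (\<Sum>v\<in>FV. Vm v * fv v * r v)" using core2[OF G, of fv fe] A by blast
    have b: "int_E Es len a fe \<le> (\<Sum>v\<in>FV. Vm v * fv v * r v)" using convb[OF _ _ c(2,6,7)] A by blast
    have eqr: "\<And>v. v \<in> FV \<Longrightarrow> r v \<ge> 0 \<and> ennreal (r v) = rho_sup Vs Es ends len Vm a" (is "\<And>v. _ \<Longrightarrow> _ \<and> _ = ?R")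
      proof -
      fix v assume v: "v \<in> FV"
      then have v': "v \<in> Vs" using c(3) by auto
      show "r v \<ge> 0 \<and> ennreal (r v) = ?R" using c(4) v hinf[OF v'] hsup[OF v'] R by (auto intro: antisym)
    qed
    have EQ: "ereal (\<Sum>v\<in>FV. Vm v * fv v * r v) = enn2ereal (rho_sup Vs Es ends len Vm a) * ereal (int_V Vs Vm fv)"
      by (rule finish_reg[OF c(1) c(5) eqr])
    then show "ereal (int_E Es len a fe) \<le> enn2ereal (rho_sup Vs Es ends len Vm a) * ereal (int_V Vs Vm fv)"
    proof -
      have "ereal (int_E Es len a fe) \<le> ereal (\<Sum>v\<in>FV. Vm v * fv v * r v)" using b by simp
      then show ?thesis unfolding EQ .
    qed
  next
    fix fv fe
    assume R: "rho_inf Vs Es ends len Vm a = rho_sup Vs Es ends len Vm a"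
      and A: "graph_C0_fn Vs Es ends len fv fe \<and> (\<forall>e\<in>Es. concave_on {0..len e} (fe e))"
    then obtain FV FE r where c: "finite FV" "FE \<subseteq> Es" "FV \<subseteq> Vs"
      "\<forall>v\<in>FV. half_degree Es ends len Vm a v = ennreal (r v) \<and> r v \<ge> 0"
      "int_V Vs Vm fv = (\<Sum>v\<in>FV. Vm v * fv v)"
      "int_E Es len a fe = (\<Sum>e\<in>FE. a e * integral {0..len e} (fe e))"
      "(\<Sum>e\<in>FE. edge_mass len a e * (fv (fst (ends e)) + fv (snd (ends e))) / 2)
       = (\<Sum>v\<in>FV. Vm v * fv v * r v)" using core2[OF G, of fv fe] A by blast
    have b: "int_E Es len a fe \<ge> (\<Sum>v\<in>FV. Vm v * fv v * r v)" using concb[OF _ _ c(2,6,7)] A by blast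
    have eqr: "\<And>v. v \<in> FV \<Longrightarrow> r v \<ge> 0 \<and> ennreal (r v) = rho_inf Vs Es ends len Vm a" (is "\<And>v. _ \<Longrightarrow> _ \<and> _ = ?R")
      proof -
      fix v assume v: "v \<in> FV"
      then have v': "v \<in> Vs" using c(3) by auto
      show "r v \<ge> 0 \<and> ennreal (r v) = ?R" using c(4) v hinf[OF v'] hsup[OF v'] R by (auto intro: antisym)
    qed
    have EQ: "ereal (\<Sum>v\<in>FV. Vm v * fv v * r v) = enn2ereal (rho_inf Vs Es ends len Vm a) * ereal (int_V Vs Vm fv)"
      by (rule finish_reg[OF c(1) c(5) eqr])
    then show "enn2ereal (rho_inf Vs Es ends len Vm a) * ereal (int_V Vs Vm fv) \<le> ereal (int_E Es len a fe)"
    proof -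
      have "ereal (int_E Es len a fe) \<ge> ereal (\<Sum>v\<in>FV. Vm v * fv v * r v)" using b by simp
      then show ?thesis unfolding EQ .
    qed
  qed
qed

end
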